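(* Let $n\ge 2$ and let $v_1,\ldots,v_n$ be positive integers all less than or equal to $1.5n+1$. Then one of the following holds: $\mathrm{ML}(v_1,\ldots,v_n)<\frac{1}{n+1}$; or $\mathrm{ML}(v_1,\ldots,v_n)=\frac{s}{ns+1}$ for some integer $1\le s\le 3$; or $\mathrm{ML}(v_1,\ldots,v_n)\ge\frac1n$.
   Context: For a real number $x$, $\Vert x\Vert$ denotes the distance from $x$ to the nearest integer. For positive integers $v_1,\ldots,v_n$, the maximum loneliness is $\mathrm{ML}(v_1,\ldots,v_n)=\max_{t\in\mathbb{R}}\min_{1\le i\le n}\Vert t v_i\Vert$. *)

theory Defs
  imports Complex_Main
begin

definition dist_nearest_int :: "real \<Rightarrow> real" where
  "dist_nearest_int x = (INF k\<in>(UNIV::int set). \<bar>x - of_int k\<bar>)"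

definition max_loneliness :: "nat \<Rightarrow> (nat \<Rightarrow> nat) \<Rightarrow> real" where
  "max_loneliness n v = (SUP t\<in>(UNIV::real set). Min ((\<lambda>i. dist_nearest_int (t * real (v i))) ` {1..n}))"

end

theory Submission
  imports Defs "HOL-Analysis.Analysis"
begin

lemma dn_frac: "dist_nearest_int x = min (frac x) (1 - frac x)"
proof -
  let ?X = "(\<lambda>k. \<bar>x - of_int k\<bar>) ` (UNIV::int set)"
  have a: "\<bar>x - of_int \<lfloor>x\<rfloor>\<bar> = frac x" by (simp add: frac_def)
  have b: "\<bar>x - of_int (\<lfloor>x\<rfloor> + 1)\<bar> = 1 - frac x"
    using frac_lt_1[of x] by (simp add: frac_def)
  have mem: "min (frac x) (1 - frac x) \<in> ?X"
    using a b by (metis min_def rangeI)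
  have low: "\<forall>y\<in>?X. min (frac x) (1 - frac x) \<le> y"
  proof
    fix y assume "y \<in> ?X"
    then obtain k where k: "y = \<bar>x - of_int k\<bar>" by auto
    show "min (frac x) (1 - frac x) \<le> y"
    proof (cases "k \<le> \<lfloor>x\<rfloor>")
      case True
      hence "real_of_int k \<le> of_int \<lfloor>x\<rfloor>" by linarith
      thus ?thesis using k of_int_floor_le[of x] by (simp add: frac_def)
    next
      case False
      hence "real_of_int k \<ge> of_int \<lfloor>x\<rfloor> + 1" by linarith
      thus ?thesis using k of_int_floor_le[of x] by (simp add: frac_def)
    qed
  qed
  show ?thesis unfolding dist_nearest_int_def
    using cInf_eq_minimum[OF mem] low by blast
qed

lemma dn_add_int: "dist_nearest_int (x + of_int m) = dist_nearest_int x"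
  by (simp add: dn_frac frac_def)

lemma dn_neg: "dist_nearest_int (- x) = dist_nearest_int x"
proof (cases "x \<in> \<int>")
  case True
  then have f1: "frac x = 0" using frac_eq_0_iff by blast
  have f2: "frac (- x) = 0" using True frac_eq_0_iff by (metis Ints_minus)
  show ?thesis by (simp only: dn_frac f1 f2)
next
  case False
  then show ?thesis by (simp add: dn_frac frac_neg min.commute)
qed

lemma dn_lip: "dist_nearest_int x \<le> dist_nearest_int y + \<bar>x - y\<bar>"
proof -
  let ?m = "if frac y \<le> 1 - frac y then \<lfloor>y\<rfloor> else \<lfloor>y\<rfloor> + 1"
  have e: "dist_nearest_int y = \<bar>y - of_int ?m\<bar>"
    using frac_lt_1[of y] by (auto simp: dn_frac frac_def)
  have bdd: "bdd_below ((\<lambda>k. \<bar>x - of_int k\<bar>) ` (UNIV::int set))"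
    by (rule bdd_belowI[of _ 0]) auto
  have "dist_nearest_int x \<le> \<bar>x - of_int ?m\<bar>"
    unfolding dist_nearest_int_def by (rule cInf_lower[OF _ bdd]) auto
  also have "\<dots> \<le> \<bar>y - of_int ?m\<bar> + \<bar>x - y\<bar>" by linarith
  finally show ?thesis using e by simp
qed

definition Fv :: "nat \<Rightarrow> (nat \<Rightarrow> nat) \<Rightarrow> real \<Rightarrow> real" where
  "Fv n v t = Min ((\<lambda>i. dist_nearest_int (t * real (v i))) ` {1..n})"

lemma Fv_le: "i \<in> {1..n} \<Longrightarrow> Fv n v t \<le> dist_nearest_int (t * real (v i))"
  unfolding Fv_def by (rule Min_le) auto

lemma Fv_mem: "n \<ge> 1 \<Longrightarrow> \<exists>i\<in>{1..n}. Fv n v t = dist_nearest_int (t * real (v i))"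
proof -
  assume "n \<ge> 1"
  hence "Fv n v t \<in> (\<lambda>i. dist_nearest_int (t * real (v i))) ` {1..n}"
    unfolding Fv_def by (intro Min_in) auto
  thus ?thesis by auto
qed

lemma Fv_neg: "Fv n v (- t) = Fv n v t"
  unfolding Fv_def by (metis (no_types, opaque_lifting) dn_neg minus_mult_left)

lemma Fv_lip:
  assumes "n \<ge> 1" and "\<And>i. i \<in> {1..n} \<Longrightarrow> real (v i) \<le> V"
  shows "Fv n v t \<le> Fv n v s + V * \<bar>t - s\<bar>"
proof -
  obtain j where j: "j \<in> {1..n}" "Fv n v s = dist_nearest_int (s * real (v j))"
    using Fv_mem[OF assms(1)] by blast
  have "Fv n v t \<le> dist_nearest_int (t * real (v j))" by (rule Fv_le[OF j(1)])
  also have "\<dots> \<le> dist_nearest_int (s * real (v j)) + \<bar>t * real (v j) - s * real (v j)\<bar>"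
    by (rule dn_lip)
  also have "\<bar>t * real (v j) - s * real (v j)\<bar> = real (v j) * \<bar>t - s\<bar>"
    by (simp add: abs_mult left_diff_distrib[symmetric])
  also have "real (v j) * \<bar>t - s\<bar> \<le> V * \<bar>t - s\<bar>"
    using assms(2)[OF j(1)] by (intro mult_right_mono) auto
  finally show ?thesis using j(2) by simp
qed

lemma Fv_cont:
  assumes "n \<ge> 1" and "\<And>i. i \<in> {1..n} \<Longrightarrow> real (v i) \<le> V"
  shows "continuous_on S (Fv n v)"
proof -
  have V0: "V \<ge> 0" using assms(2)[of 1] assms(1) by auto
  show ?thesis
    unfolding continuous_on_iff
  proof (intro ballI allI impI)
    fix x e assume "x \<in> S" "(0::real) < e"
    show "\<exists>d>0. \<forall>x'\<in>S. dist x' x < d \<longrightarrow> dist (Fv n v x') (Fv n v x) < e"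
    proof (intro exI[of _ "e / (V + 1)"] conjI ballI impI)
      show "e / (V + 1) > 0" using \<open>0 < e\<close> V0 by auto
      fix y assume "dist y x < e / (V + 1)"
      hence h: "\<bar>y - x\<bar> * (V + 1) < e" using V0 by (simp add: dist_real_def field_simps)
      have "V * \<bar>y - x\<bar> < e" using h V0
        by (smt (verit, best) abs_ge_zero distrib_left mult.commute mult_cancel_right1)
      moreover have "Fv n v y \<le> Fv n v x + V * \<bar>y - x\<bar>" by (rule Fv_lip[OF assms])
      moreover have "Fv n v x \<le> Fv n v y + V * \<bar>x - y\<bar>" by (rule Fv_lip[OF assms])
      ultimately show "dist (Fv n v y) (Fv n v x) < e"
        by (simp add: dist_real_def abs_minus_commute)
    qed
  qed
qed

lemma Fv_period: "Fv n v t = Fv n v (frac t)"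
proof -
  have "\<And>i. dist_nearest_int (t * real (v i)) = dist_nearest_int (frac t * real (v i))"
  proof -
    fix i
    have "t * real (v i) = frac t * real (v i) + of_int (\<lfloor>t\<rfloor> * int (v i))"
      by (simp add: frac_def algebra_simps)
    thus "dist_nearest_int (t * real (v i)) = dist_nearest_int (frac t * real (v i))"
      by (metis dn_add_int)
  qed
  thus ?thesis unfolding Fv_def by simp
qed


lemma local_max:
  assumes n1: "n \<ge> 1" and vpos: "\<And>i. i \<in> {1..n} \<Longrightarrow> v i > 0"
    and mx: "\<And>t. Fv n v t \<le> Fv n v t0"
    and c0: "0 < Fv n v t0" and c1: "Fv n v t0 < 1/2"
  shows "\<exists>i\<in>{1..n}. frac (t0 * real (v i)) = 1 - Fv n v t0"
proof (rule ccontr)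
  let ?c = "Fv n v t0"
  let ?f = "\<lambda>i. frac (t0 * real (v i))"
  assume "\<not> ?thesis"
  hence ne: "\<And>i. i \<in> {1..n} \<Longrightarrow> ?f i \<noteq> 1 - ?c" by blast
  have rng: "?c \<le> ?f i \<and> ?f i < 1 - ?c" if i: "i \<in> {1..n}" for i
  proof -
    have "?c \<le> dist_nearest_int (t0 * real (v i))" by (rule Fv_le[OF i])
    thus ?thesis using ne[OF i] by (auto simp: dn_frac)
  qed
  define m where "m = Min ((\<lambda>i. (1 - ?c - ?f i) / (real (v i) + 1)) ` {1..n})"
  have mpos: "m > 0" unfolding m_def using n1 rng by (subst Min_gr_iff) auto
  have mle: "m \<le> (1 - ?c - ?f i) / (real (v i) + 1)" if "i \<in> {1..n}" for i
    unfolding m_def using that by (intro Min_le) auto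
  have gt: "dist_nearest_int ((t0 + m) * real (v i)) > ?c" if i: "i \<in> {1..n}" for i
  proof -
    have vp: "real (v i) > 0" using vpos[OF i] by simp
    have r: "?c \<le> ?f i" "?f i < 1 - ?c" using rng[OF i] by auto
    have "m * (real (v i) + 1) \<le> 1 - ?c - ?f i" using mle[OF i] vp
      by (simp add: pos_le_divide_eq)
    hence a: "m * real (v i) < 1 - ?c - ?f i" using mpos by (simp add: algebra_simps)
    have b: "m * real (v i) > 0" using mpos vp by simp
    define y where "y = ?f i + m * real (v i)"
    have y: "?c < y" "y < 1 - ?c" using a b r unfolding y_def by auto
    have "(t0 + m) * real (v i) = y + of_int \<lfloor>t0 * real (v i)\<rfloor>"
      unfolding y_def by (simp add: frac_def algebra_simps)
    hence "dist_nearest_int ((t0 + m) * real (v i)) = dist_nearest_int y"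
      by (metis dn_add_int)
    also have "frac y = y" using y c0 c1 by (simp add: frac_eq)
    hence "dist_nearest_int y = min y (1 - y)" by (simp add: dn_frac)
    finally show ?thesis using y by simp
  qed
  have "Fv n v (t0 + m) > ?c"
    unfolding Fv_def[of n v "t0 + m"] using n1 gt by (subst Min_gr_iff) auto
  thus False using mx[of "t0 + m"] by simp
qed


lemma arith_final:
  fixes n d :: nat and K :: int and c :: real
  assumes n2: "n \<ge> 2" and d1: "d \<ge> 1" and d3: "d \<le> 3 * n + 1" and cK: "c = K / d"
  shows "c < 1 / (real n + 1)
    \<or> (\<exists>s::nat. 1 \<le> s \<and> s \<le> 3 \<and> c = real s / (real n * real s + 1))
    \<or> c \<ge> 1 / real n"
proof (rule ccontr)
  assume "\<not> ?thesis"
  hence l: "1 / (real n + 1) \<le> K / d" and u: "K / d < 1 / real n" and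
    ns: "\<And>s::nat. 1 \<le> s \<Longrightarrow> s \<le> 3 \<Longrightarrow> c \<noteq> real s / (real n * real s + 1)"
    using cK by auto
  have dp: "real d > 0" using d1 by simp
  have np: "real n > 0" using n2 by simp
  have "real d \<le> K * (real n + 1)" using l dp np by (simp add: field_simps)
  hence "real_of_int (int d) \<le> real_of_int (K * (int n + 1))" by simp
  hence A: "int d \<le> K * (int n + 1)" by (simp only: of_int_le_iff)
  have "K * real n < real d" using u dp np by (simp add: field_simps)
  hence "real_of_int (K * int n) < real_of_int (int d)" by simp
  hence B: "K * int n < int d" by (simp only: of_int_less_iff)
  have K1: "K \<ge> 1"
  proof (rule ccontr)
    assume "\<not> K \<ge> 1" hence "K \<le> 0" by simp
    hence "K * (int n + 1) \<le> 0" by (simp add: mult_nonpos_nonneg)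
    thus False using A d1 by simp
  qed
  have K3: "K \<le> 3"
  proof (rule ccontr)
    assume "\<not> K \<le> 3" hence "K \<ge> 4" by simp
    hence "K * int n \<ge> 4 * int n" by (simp add: mult_right_mono)
    moreover have "int d \<le> 3 * int n + 1" using d3 by simp
    ultimately show False using B n2 by linarith
  qed
  have "K = 1 \<or> K = 2 \<or> K = 3" using K1 K3 by auto
  moreover
  { assume K: "K = 1"
    hence "d = n + 1" using A B by simp
    hence "c = real 1 / (real n * real 1 + 1)" using cK K by simp
    hence False using ns[of 1] by simp }
  moreover
  { assume K: "K = 2"
    hence "int d \<le> 2 * int n + 2" "2 * int n < int d" using A B by simp_all
    hence "d = 2 * n + 1 \<or> d = 2 * n + 2" by linarith
    moreover have "d = 2 * n + 1 \<Longrightarrow> c = real 2 / (real n * real 2 + 1)" using cK K by simp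
    moreover have "d = 2 * n + 2 \<Longrightarrow> c = real 1 / (real n * real 1 + 1)" using cK K
      by (simp add: field_simps)
    ultimately have False using ns[of 1] ns[of 2] by auto }
  moreover
  { assume K: "K = 3"
    hence "d = 3 * n + 1" using A B d3 by simp
    hence "c = real 3 / (real n * real 3 + 1)" using cK K by simp
    hence False using ns[of 3] by simp }
  ultimately show False by blast
qed


theorem proposition11p3:
  fixes n :: nat and v :: "nat \<Rightarrow> nat"
  assumes "n \<ge> 2"
    and "\<And>i. i \<in> {1..n} \<Longrightarrow> v i > 0"
    and "\<And>i. i \<in> {1..n} \<Longrightarrow> real (v i) \<le> 1.5 * real n + 1"
  shows "max_loneliness n v < 1 / (real n + 1)
    \<or> (\<exists>s::nat. 1 \<le> s \<and> s \<le> 3 \<and> max_loneliness n v = real s / (real n * real s + 1))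
    \<or> max_loneliness n v \<ge> 1 / real n"
proof -
  have n1: "n \<ge> 1" using assms(1) by simp
  have cont: "continuous_on {0..1} (Fv n v)" by (rule Fv_cont[OF n1 assms(3)])
  obtain t0 where t0: "t0 \<in> {0..1::real}" "\<And>y. y \<in> {0..1} \<Longrightarrow> Fv n v y \<le> Fv n v t0"
    using continuous_attains_sup[OF compact_Icc _ cont] by auto
  have mx: "\<And>t. Fv n v (t::real) \<le> Fv n v t0"
  proof -
    fix t :: real
    have "frac t \<in> {0..1}" using frac_ge_0[of t] frac_lt_1[of t] by auto
    thus "Fv n v t \<le> Fv n v t0" using t0(2) Fv_period[of n v t] by simp
  qed
  have MLeq: "max_loneliness n v = Fv n v t0"
  proof -
    have "max_loneliness n v = Sup (range (Fv n v))"
      unfolding max_loneliness_def Fv_def by simp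
    also have "\<dots> = Fv n v t0" using mx by (intro cSup_eq_maximum) auto
    finally show ?thesis .
  qed
  define c where "c = Fv n v t0"
  have np: "real n > 0" using n1 by simp
  consider "c \<le> 0" | "c \<ge> 1/2" | "0 < c \<and> c < 1/2" by linarith
  then show ?thesis
  proof cases
    case 1
    have "1 / (real n + 1) > 0" using np by simp
    hence "max_loneliness n v < 1 / (real n + 1)" using 1 MLeq c_def by linarith
    thus ?thesis by blast
  next
    case 2
    have "1 / real n \<le> 1/2" using assms(1) by (simp add: field_simps)
    hence "max_loneliness n v \<ge> 1 / real n" using 2 MLeq c_def by linarith
    thus ?thesis by blast
  next
    case 3
    obtain i where i: "i \<in> {1..n}" "frac (t0 * real (v i)) = 1 - c"
      using local_max[OF n1 assms(2) mx] 3 c_def by blast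
    have mx': "\<And>t. Fv n v (t::real) \<le> Fv n v (- t0)" using mx Fv_neg by metis
    obtain j where j: "j \<in> {1..n}" "frac (- t0 * real (v j)) = 1 - c"
      using local_max[OF n1 assms(2) mx'] 3 c_def Fv_neg[of n v t0] by auto
    have nint: "t0 * real (v j) \<notin> \<int>"
    proof
      assume "t0 * real (v j) \<in> \<int>"
      hence "- t0 * real (v j) \<in> \<int>" by (metis Ints_minus minus_mult_left)
      hence "frac (- t0 * real (v j)) = 0" by (simp add: frac_eq_0_iff)
      thus False using j(2) 3 by linarith
    qed
    have fj: "frac (t0 * real (v j)) = c"
      using j(2) nint frac_neg[of "t0 * real (v j)"] by simp
    have vij: "v i \<noteq> v j"
    proof
      assume "v i = v j"
      thus False using i(2) fj 3 by simp
    qed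
    define a where "a = \<lfloor>t0 * real (v i)\<rfloor>"
    define b where "b = \<lfloor>t0 * real (v j)\<rfloor>"
    have ea: "t0 * real (v i) = of_int a + 1 - c" using i(2) unfolding a_def frac_def by simp
    have eb: "t0 * real (v j) = of_int b + c" using fj unfolding b_def frac_def by simp
    define d where "d = v i + v j"
    have td: "t0 * real d = of_int (a + b + 1)" using ea eb unfolding d_def by (simp add: algebra_simps)
    have "c * real d = (t0 * real (v j) - of_int b) * real d" using eb by simp
    also have "\<dots> = (t0 * real d) * real (v j) - of_int b * real d" by (simp add: algebra_simps)
    also have "\<dots> = of_int ((a + b + 1) * int (v j) - b * int d)" using td by simp
    finally have cd: "c * real d = of_int ((a + b + 1) * int (v j) - b * int d)" .
    have d1: "d \<ge> 1" using assms(2)[OF i(1)] unfolding d_def by simp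
    have "2 * real (v i) \<le> 3 * real n + 2" "2 * real (v j) \<le> 3 * real n + 2"
      using assms(3)[OF i(1)] assms(3)[OF j(1)] by simp_all
    hence "2 * v i \<le> 3 * n + 2" "2 * v j \<le> 3 * n + 2" by linarith+
    hence d3: "d \<le> 3 * n + 1" using vij unfolding d_def by linarith
    have cK: "c = of_int ((a + b + 1) * int (v j) - b * int d) / real d"
      using cd d1 by (simp add: field_simps)
    show ?thesis using arith_final[OF assms(1) d1 d3 cK] MLeq c_def by simp
  qed
qed

end
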